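(* Let $\mathrm m\in\mathbb Z^d$ be primitive (components setwise coprime), and let $n=n(\mathrm m)$ be the length of the shortest cycle with index $\mathrm m$ in the fundamental graph $\mathcal G_*$ (assume such a cycle exists). Then $$\mathcal I^{\mathrm m}_{n+1}(Q)=\sum_{\mathbf c\in\mathcal P_n^{\mathrm m}}h_1(q_1,\dots,q_n),$$ $$\mathcal I^{\mathrm m}_{n+2}(Q)=\sum_{\mathbf c\in\mathcal P_n^{\mathrm m}}h_2(q_1,\dots,q_n)+\sum_{\mathbf c\in\mathcal P_{n+1}^{\mathrm m}}h_1(q_1,\dots,q_{n+1}),$$ where in each sum $\mathbf c=[\mathbf e_1,\dots,\mathbf e_\ell]$ runs over distinct prime cycles (as edge sequences), $\mathbf e_j=(v_j,v_{j+1})$, $q_j=Q(v_j)$, and $h_1(x_1,\dots,x_\ell)=\sum_{j}x_j$, $h_2(x_1,\dots,x_\ell)=\sum_{1\le j\le l\le \ell}x_jx_l$. In particular, if the periodic graph $\mathcal G$ is bipartite, then $\mathcal P_{n+1}^{\mathrm m}=\varnothing$ and $\mathcal I^{\mathrm m}_{n+2}(Q)=\sum_{\mathbf c\in\mathcal P_n^{\mathrm m}}h_2(q_1,\dots,q_n)$.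
   Context: Let $\Gamma$ be a lattice of rank $d$ in $\mathbb R^d$ with basis $\mathfrak a_1,\dots,\mathfrak a_d$ and fundamental cell $\Omega=\{\sum_s x_s\mathfrak a_s: x_s\in[0,1)\}$. A $\Gamma$-periodic graph $\mathcal G=(\mathcal V,\mathcal E)$ is a connected, locally finite graph embedded in $\mathbb R^d$, invariant under translation by $\Gamma$, with finite quotient; $\mathcal G$ has no loops, multiple edges are allowed. Edges are counted with both orientations ($\mathcal A$ oriented edges, $\bar{\mathbf e}$ inverse). The fundamental graph $\mathcal G_*=(\mathcal V_*,\mathcal A_* )=\mathcal G/\Gamma$ (may contain loops and multiple edges). Every vertex is uniquely $v=v_0+[v]$ with $v_0\in\Omega$, $[v]\in\Gamma$; for $\mathbf e=(u,v)$, $\tau(\mathbf e)=[v]_{\mathbb A}-[u]_{\mathbb A}\in\mathbb Z^d$ (coordinates in the basis), defined on $\mathcal A_*$ by $\Gamma$-invariance, with $\tau(\bar{\mathbf e})=-\tau(\mathbf e)$. A potential is $Q:\mathcal V_*\to\mathbb C$. A graph is bipartite if its vertices split into two parts with every edge joining different parts. A closed path $(\mathbf e_1,\dots,\mathbf e_\ell)$, $\mathbf e_j=(v_j,v_{j+1})$, $v_{\ell+1}=v_1$, has length $\ell$; prime if not an $r$-fold repetition of a closed path with $r\ge2$. A cycle is its class under cyclic permutations (prime if the path is prime), with length $\ell$ and index $\tau(\mathbf c)=\sum_j\tau(\mathbf e_j)$. The modified fundamental graph $\widetilde{\mathcal G}_*$ is $\mathcal G_*$ with one added loop $\mathbf e_v$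 at each $v$, index $0$. Weight $\omega(\mathbf c,Q)=\prod_j\omega(\mathbf e_j)$, $\omega(\mathbf e)=1$ for $\mathbf e\in\mathcal A_*$, $\omega(\mathbf e_v)=Q(v)$. $\mathcal P,\widetilde{\mathcal P}$: prime cycles of $\mathcal G_*$, $\widetilde{\mathcal G}_*$; $\mathcal P_\ell^{\mathrm m}$: prime cycles of $\mathcal G_*$ of length $\ell$ and index $\mathrm m$. $\mathcal I_N^{\mathrm m}(Q)=\sum\frac1r\omega^r(\mathbf c,Q)$ over $r\in\{1,\dots,N\}$, $\mathbf c\in\widetilde{\mathcal P}\setminus\mathcal P$ with $r|\mathbf c|=N$, $r\tau(\mathbf c)=\mathrm m$ (a Floquet spectral invariant). *)

theory Defs
  imports "HOL-Analysis.Finite_Cartesian_Product"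
begin

text \<open>Fundamental graph G_* = (V, A) with oriented arcs A (each with its inverse),
  source/target maps, and index tau : A -> Z^d (d = CARD('d)).
  Arcs of the modified graph are Inl e (e an arc of G_*) or Inr v (the added loop e_v).\<close>

type_synonym ('e,'v) marc = "'e + 'v"

fun arc_src :: "('e \<Rightarrow> 'v) \<Rightarrow> ('e,'v) marc \<Rightarrow> 'v" where
  "arc_src src (Inl e) = src e"
| "arc_src src (Inr v) = v"

fun arc_tgt :: "('e \<Rightarrow> 'v) \<Rightarrow> ('e,'v) marc \<Rightarrow> 'v" where
  "arc_tgt tgt (Inl e) = tgt e"
| "arc_tgt tgt (Inr v) = v"

fun arc_tau :: "('e \<Rightarrow> int ^ 'd) \<Rightarrow> ('e,'v) marc \<Rightarrow> int ^ 'd" where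
  "arc_tau tau (Inl e) = tau e"
| "arc_tau tau (Inr v) = 0"

fun arc_weight :: "('v \<Rightarrow> complex) \<Rightarrow> ('e,'v) marc \<Rightarrow> complex" where
  "arc_weight Q (Inl e) = 1"
| "arc_weight Q (Inr v) = Q v"

definition periodic_adj ::
  "'e set \<Rightarrow> ('e \<Rightarrow> 'v) \<Rightarrow> ('e \<Rightarrow> 'v) \<Rightarrow> ('e \<Rightarrow> int ^ 'd)
   \<Rightarrow> ('v \<times> (int ^ 'd)) \<Rightarrow> ('v \<times> (int ^ 'd)) \<Rightarrow> bool" where
  "periodic_adj A src tgt tau x y \<longleftrightarrow>
     (\<exists>e\<in>A. src e = fst x \<and> tgt e = fst y \<and> snd y = snd x + tau e)"

definition fundamental_graph ::
  "'v set \<Rightarrow> 'e set \<Rightarrow> ('e \<Rightarrow> 'v) \<Rightarrow> ('e \<Rightarrow> 'v) \<Rightarrow> ('e \<Rightarrow> 'e) \<Rightarrow> ('e \<Rightarrow> int ^ 'd) \<Rightarrow> bool" where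
  "fundamental_graph V A src tgt rv tau \<longleftrightarrow>
     finite V \<and> V \<noteq> {} \<and> finite A \<and>
     (\<forall>e\<in>A. src e \<in> V \<and> tgt e \<in> V \<and> rv e \<in> A \<and> rv (rv e) = e \<and> rv e \<noteq> e \<and>
             src (rv e) = tgt e \<and> tgt (rv e) = src e \<and> tau (rv e) = - tau e) \<and>
     \<comment> \<open>the periodic graph has no loops\<close>
     (\<forall>e\<in>A. \<not> (src e = tgt e \<and> tau e = 0)) \<and>
     \<comment> \<open>the periodic graph (vertex set V x Z^d) is connected\<close>
     (\<forall>x\<in>V \<times> UNIV. \<forall>y\<in>V \<times> UNIV.
        (x, y) \<in> {(a, b). periodic_adj A src tgt tau a b}\<^sup>*)"

definition periodic_bipartite ::
  "'v set \<Rightarrow> 'e set \<Rightarrow> ('e \<Rightarrow> 'v) \<Rightarrow> ('e \<Rightarrow> 'v) \<Rightarrow> ('e \<Rightarrow> int ^ 'd) \<Rightarrow> bool" where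
  "periodic_bipartite V A src tgt tau \<longleftrightarrow>
     (\<exists>f :: 'v \<times> (int ^ 'd) \<Rightarrow> bool. \<forall>x\<in>V \<times> UNIV. \<forall>y\<in>V \<times> UNIV.
        periodic_adj A src tgt tau x y \<longrightarrow> f x \<noteq> f y)"

definition closed_path ::
  "'v set \<Rightarrow> 'e set \<Rightarrow> ('e \<Rightarrow> 'v) \<Rightarrow> ('e \<Rightarrow> 'v) \<Rightarrow> ('e,'v) marc list \<Rightarrow> bool" where
  "closed_path V A src tgt p \<longleftrightarrow>
     p \<noteq> [] \<and> set p \<subseteq> Inl ` A \<union> Inr ` V \<and>
     (\<forall>j < length p. arc_tgt tgt (p ! j) = arc_src src (p ! ((j + 1) mod length p)))"

definition prime_path :: "'a list \<Rightarrow> bool" where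
  "prime_path p \<longleftrightarrow> \<not> (\<exists>q r. r \<ge> 2 \<and> p = concat (replicate r q))"

text \<open>A cycle is the class of a closed path under cyclic permutations.\<close>
definition cyc :: "'a list \<Rightarrow> 'a list set" where
  "cyc p = {rotate k p | k. True}"

definition rep :: "'a list set \<Rightarrow> 'a list" where
  "rep c = (SOME p. p \<in> c)"

definition prime_cycles_mod ::
  "'v set \<Rightarrow> 'e set \<Rightarrow> ('e \<Rightarrow> 'v) \<Rightarrow> ('e \<Rightarrow> 'v) \<Rightarrow> ('e,'v) marc list set set" where
  "prime_cycles_mod V A src tgt = {cyc p | p. closed_path V A src tgt p \<and> prime_path p}"

definition prime_cycles ::
  "'v set \<Rightarrow> 'e set \<Rightarrow> ('e \<Rightarrow> 'v) \<Rightarrow> ('e \<Rightarrow> 'v) \<Rightarrow> ('e,'v) marc list set set" where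
  "prime_cycles V A src tgt =
     {cyc p | p. closed_path V A src tgt p \<and> prime_path p \<and> set p \<subseteq> Inl ` A}"

definition cyc_len :: "'a list set \<Rightarrow> nat" where
  "cyc_len c = length (rep c)"

definition cyc_index :: "('e \<Rightarrow> int ^ 'd) \<Rightarrow> ('e,'v) marc list set \<Rightarrow> int ^ 'd" where
  "cyc_index tau c = sum_list (map (arc_tau tau) (rep c))"

definition cyc_weight :: "('v \<Rightarrow> complex) \<Rightarrow> ('e,'v) marc list set \<Rightarrow> complex" where
  "cyc_weight Q c = prod_list (map (arc_weight Q) (rep c))"

definition P_lm ::
  "'v set \<Rightarrow> 'e set \<Rightarrow> ('e \<Rightarrow> 'v) \<Rightarrow> ('e \<Rightarrow> 'v) \<Rightarrow> ('e \<Rightarrow> int ^ 'd) \<Rightarrow> nat \<Rightarrow> int ^ 'd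
   \<Rightarrow> ('e,'v) marc list set set" where
  "P_lm V A src tgt tau l m =
     {c \<in> prime_cycles V A src tgt. cyc_len c = l \<and> cyc_index tau c = m}"

definition I_inv ::
  "'v set \<Rightarrow> 'e set \<Rightarrow> ('e \<Rightarrow> 'v) \<Rightarrow> ('e \<Rightarrow> 'v) \<Rightarrow> ('e \<Rightarrow> int ^ 'd) \<Rightarrow> nat \<Rightarrow> int ^ 'd
   \<Rightarrow> ('v \<Rightarrow> complex) \<Rightarrow> complex" where
  "I_inv V A src tgt tau N m Q =
     (\<Sum>(c, r) \<in> {(c, r). c \<in> prime_cycles_mod V A src tgt - prime_cycles V A src tgt \<and>
                        r \<in> {1..N} \<and> r * cyc_len c = N \<and>
                        (\<chi> i. int r * cyc_index tau c $ i) = m}.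
        cyc_weight Q c ^ r / of_nat r)"

definition h1_cyc :: "('e \<Rightarrow> 'v) \<Rightarrow> ('v \<Rightarrow> complex) \<Rightarrow> ('e,'v) marc list set \<Rightarrow> complex" where
  "h1_cyc src Q c = (let q = map (\<lambda>a. Q (arc_src src a)) (rep c) in
     \<Sum>j<length q. q ! j)"

definition h2_cyc :: "('e \<Rightarrow> 'v) \<Rightarrow> ('v \<Rightarrow> complex) \<Rightarrow> ('e,'v) marc list set \<Rightarrow> complex" where
  "h2_cyc src Q c = (let q = map (\<lambda>a. Q (arc_src src a)) (rep c) in
     \<Sum>j<length q. \<Sum>l\<in>{j..<length q}. q ! j * q ! l)"

definition primitive_vec :: "int ^ 'd \<Rightarrow> bool" where
  "primitive_vec m \<longleftrightarrow> (\<forall>k::int. (\<forall>i. k dvd m $ i) \<longrightarrow> is_unit k)"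

definition shortest_len ::
  "'v set \<Rightarrow> 'e set \<Rightarrow> ('e \<Rightarrow> 'v) \<Rightarrow> ('e \<Rightarrow> 'v) \<Rightarrow> ('e \<Rightarrow> int ^ 'd) \<Rightarrow> int ^ 'd \<Rightarrow> nat" where
  "shortest_len V A src tgt tau m =
     (LEAST l. \<exists>p. closed_path V A src tgt p \<and> set p \<subseteq> Inl ` A \<and> length p = l \<and>
                   sum_list (map (arc_tau tau) p) = m)"

end

theory Submission
  imports Defs
begin


lemma sum_list_map_rotate:
  fixes f :: "'a \<Rightarrow> 'b::comm_monoid_add"
  shows "sum_list (map f (rotate k p)) = sum_list (map f p)"
proof (induction k)
  case (Suc k) then show ?case
    by (cases "rotate k p") (simp_all add: rotate_Suc add.commute)
qed simp

lemma prod_list_map_rotate: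
  fixes f :: "'a \<Rightarrow> 'b::comm_monoid_mult"
  shows "prod_list (map f (rotate k p)) = prod_list (map f p)"
proof (induction k)
  case (Suc k) then show ?case
    by (cases "rotate k p") (simp_all add: rotate_Suc mult.commute)
qed simp

lemma rotate_distinct:
  assumes pr: "prime_path p" and ij: "i < j" "j < length p"
  shows "rotate i p \<noteq> rotate j p"
proof
  assume eq: "rotate i p = rotate j p"
  define L where "L = length p"
  define d where "d = j - i"
  have d: "0 < d" "d < L" using ij by (auto simp: d_def L_def)
  have "rotate (L - i) (rotate i p) = p"
    using ij by (simp add: rotate_rotate L_def)
  moreover have "rotate (L - i) (rotate j p) = rotate d p"
  proof -
    have "rotate (L - i) (rotate j p) = rotate (L + d) p" using ij
      by (simp add: rotate_rotate d_def L_def)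
    also have "\<dots> = rotate d p"
      using d by (subst rotate_conv_mod) (simp add: L_def)
    finally show ?thesis .
  qed
  ultimately have rd: "rotate d p = p" using eq by simp
  hence "drop d p @ take d p = take d p @ drop d p"
    using d by (simp add: rotate_drop_take L_def)
  then obtain a b zs where a: "concat (replicate a zs) = drop d p"
    and b: "concat (replicate b zs) = take d p"
    using comm_append_are_replicate by blast
  have "drop d p \<noteq> []" "take d p \<noteq> []" using d by (auto simp: L_def)
  hence "a \<noteq> 0" "b \<noteq> 0" using a b by (metis concat.simps(1) replicate_0)+
  have "p = concat (replicate (b + a) zs)"
    using a b by (simp add: replicate_add)
  moreover have "b + a \<ge> 2" using \<open>a \<noteq> 0\<close> \<open>b \<noteq> 0\<close> by simp
  ultimately show False using pr unfolding prime_path_def by blast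
qed

lemma cyc_image: "p \<noteq> [] \<Longrightarrow> cyc p = (\<lambda>k. rotate k p) ` {..<length p}"
proof -
  have "rotate k p \<in> (\<lambda>k. rotate k p) ` {..<length p}" if "p \<noteq> []" for k
    using that by (intro image_eqI[of _ _ "k mod length p"]) (auto simp: rotate_conv_mod[of k])
  then show "p \<noteq> [] \<Longrightarrow> ?thesis" unfolding cyc_def by auto
qed

lemma prime_nonempty: "prime_path p \<Longrightarrow> p \<noteq> []"
  unfolding prime_path_def by (metis concat_replicate_trivial le_refl)

lemma finite_cyc: "finite (cyc p)"
proof (cases "p = []")
  case True then show ?thesis by (simp add: cyc_def)
next
  case False then show ?thesis by (simp add: cyc_image)
qed

lemma inj_rot: "prime_path p \<Longrightarrow> inj_on (\<lambda>k. rotate k p) {..<length p}"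
  unfolding inj_on_def using rotate_distinct
  by (metis lessThan_iff nat_neq_iff)

lemma sum_cyc:
  "prime_path p \<Longrightarrow> (\<Sum>q\<in>cyc p. g q) = (\<Sum>k<length p. g (rotate k p))"
  using prime_nonempty[of p] by (simp add: cyc_image sum.reindex inj_rot)

lemma self_in_cyc: "p \<in> cyc p"
  unfolding cyc_def by (auto intro: exI[of _ 0])

lemma cyc_mem_eq: "q \<in> cyc p \<Longrightarrow> cyc q = cyc p"
proof -
  assume "q \<in> cyc p"
  then obtain k where k: "q = rotate k p" by (auto simp: cyc_def)
  show "cyc q = cyc p"
  proof
    show "cyc q \<subseteq> cyc p" unfolding cyc_def k by (auto simp: rotate_rotate)
    show "cyc p \<subseteq> cyc q"
    proof
      fix r assume "r \<in> cyc p"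
      then obtain j where j: "r = rotate j p" by (auto simp: cyc_def)
      show "r \<in> cyc q"
      proof (cases "p = []")
        case True then show ?thesis using j k by (simp add: cyc_def)
      next
        case False
        define L where "L = length p"
        have "rotate (j + L - k mod L) (rotate k p) = rotate (j + L - k mod L + k) p"
          by (simp add: rotate_rotate)
        also have "\<dots> = rotate j p"
        proof (subst (1 2) rotate_conv_mod)
          have "(j + L - k mod L + k) mod L = j mod L"
          proof -
            have "k mod L < L" using False by (simp add: L_def)
            moreover have "L * (k div L) + k mod L = k" by (rule mult_div_mod_eq)
            ultimately have "j + L - k mod L + k = (j + L * (k div L)) + L" by linarith
            thus ?thesis by simp
          qed
          then show "rotate ((j + L - k mod L + k) mod length p) p = rotate (j mod length p) p"
            by (simp add: L_def)
        qed
        finally have "rotate (j + L - k mod L) (rotate k p) = rotate j p" .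
        then show ?thesis unfolding cyc_def k j
          by (intro CollectI exI[of _ "j + L - k mod L"]) simp
      qed
    qed
  qed
qed

lemma rep_in: "rep (cyc p) \<in> cyc p"
  unfolding rep_def by (rule someI[of _ p]) (rule self_in_cyc)

lemma cyc_rep: "cyc (rep (cyc p)) = cyc p"
  by (rule cyc_mem_eq[OF rep_in])

lemma cyc_disj: "cyc p \<noteq> cyc q \<Longrightarrow> cyc p \<inter> cyc q = {}"
  using cyc_mem_eq by blast

lemma orbit_sum:
  assumes fin: "finite W" and cl: "\<And>p k. p \<in> W \<Longrightarrow> rotate k p \<in> W"
  shows "(\<Sum>c\<in>cyc ` W. \<Sum>q\<in>c. g q) = (\<Sum>q\<in>W. g q)"
proof -
  have U: "\<Union>(cyc ` W) = W"
  proof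
    show "\<Union>(cyc ` W) \<subseteq> W" using cl by (auto simp: cyc_def)
    show "W \<subseteq> \<Union>(cyc ` W)" using self_in_cyc by blast
  qed
  have "(\<Sum>q\<in>\<Union>(cyc ` W). g q) = (\<Sum>c\<in>cyc ` W. \<Sum>q\<in>c. g q)"
    using sum.Union_disjoint[of "cyc ` W" g] finite_cyc cyc_disj by auto
  then show ?thesis using U by simp
qed



locale GS =
  fixes V :: "'v set" and A :: "'e set" and src tgt :: "'e \<Rightarrow> 'v" and rv :: "'e \<Rightarrow> 'e"
    and tau :: "'e \<Rightarrow> int ^ 'd" and m :: "int ^ 'd" and Q :: "'v \<Rightarrow> complex"
  assumes G: "fundamental_graph V A src tgt rv tau"
    and prim: "primitive_vec m"
begin

abbreviation CP where "CP p \<equiv> closed_path V A src tgt p"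
abbreviation UU where "UU \<equiv> Inl ` A \<union> Inr ` V"
abbreviation RR where "RR a b \<equiv> arc_tgt tgt a = arc_src src b"

definition idx :: "('e,'v) marc list \<Rightarrow> int ^ 'd" where
  "idx p = sum_list (map (arc_tau tau) p)"
definition nI :: "('e,'v) marc list \<Rightarrow> nat" where
  "nI p = length (filter (\<lambda>a. \<not> isl a) p)"
definition wt :: "('e,'v) marc list \<Rightarrow> complex" where
  "wt p = prod_list (map (arc_weight Q) p)"
definition f0 :: "('e,'v) marc list \<Rightarrow> complex" where
  "f0 p = Q (arc_src src (hd p))"
definition h1l :: "('e,'v) marc list \<Rightarrow> complex" where
  "h1l p = sum_list (map (\<lambda>a. Q (arc_src src a)) p)"
definition Wk :: "nat \<Rightarrow> nat \<Rightarrow> ('e,'v) marc list set" where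
  "Wk N k = {p. CP p \<and> length p = N \<and> idx p = m \<and> nI p = k}"
definition ins :: "('e,'v) marc list \<Rightarrow> ('e,'v) marc list" where
  "ins q = Inr (arc_src src (hd q)) # q"

lemma finV: "finite V" and finA: "finite A"
  and Ax: "\<And>e. e \<in> A \<Longrightarrow> src e \<in> V \<and> tgt e \<in> V"
  using G unfolding fundamental_graph_def by auto

lemma m_nz: "m \<noteq> 0"
proof
  assume "m = 0"
  hence "\<forall>i. (2::int) dvd m $ i" by simp
  hence "is_unit (2::int)" using prim unfolding primitive_vec_def by blast
  thus False by simp
qed

lemma r_one:
  assumes "(\<chi> i. int r * x $ i) = m"
  shows "r = 1"
proof -
  have "\<forall>i. int r dvd m $ i" using assms[symmetric] by auto
  hence "is_unit (int r)" using prim unfolding primitive_vec_def by blast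
  thus ?thesis by simp
qed

lemma idx_concat_rep: "idx (concat (replicate r q)) $ i = int r * idx q $ i"
  by (induction r) (simp_all add: idx_def algebra_simps)

lemma idx_prime: "idx p = m \<Longrightarrow> prime_path p"
proof (unfold prime_path_def, rule notI)
  assume m: "idx p = m" and "\<exists>q r. 2 \<le> r \<and> p = concat (replicate r q)"
  then obtain q r where r: "r \<ge> 2" and p: "p = concat (replicate r q)" by blast
  have "(\<chi> i. int r * idx q $ i) = m"
    using m p idx_concat_rep by (simp add: vec_eq_iff)
  thus False using r_one r by fastforce
qed

lemma idx_rotate: "idx (rotate k p) = idx p"
  unfolding idx_def by (rule sum_list_map_rotate)
lemma wt_rotate: "wt (rotate k p) = wt p"
  unfolding wt_def by (rule prod_list_map_rotate)
lemma h1l_rotate: "h1l (rotate k p) = h1l p"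
  unfolding h1l_def by (rule sum_list_map_rotate)
lemma nI_sum: "nI p = sum_list (map (\<lambda>a. if isl a then 0 else 1::nat) p)"
  unfolding nI_def by (induction p) auto
lemma nI_rotate: "nI (rotate k p) = nI p"
  unfolding nI_sum by (rule sum_list_map_rotate)

lemma closed_alt:
  "CP p \<longleftrightarrow> p \<noteq> [] \<and> set p \<subseteq> UU \<and> successively RR p \<and> RR (last p) (hd p)"
proof
  assume c: "CP p"
  hence ne: "p \<noteq> []" and s: "set p \<subseteq> UU"
    and h: "\<forall>j<length p. RR (p ! j) (p ! ((j + 1) mod length p))"
    unfolding closed_path_def by auto
  have "successively RR p"
    unfolding successively_conv_nth using h by (metis Suc_eq_plus1 Suc_lessD mod_less)
  moreover have "RR (last p) (hd p)"
    using h[rule_format, of "length p - 1"] ne by (simp add: last_conv_nth hd_conv_nth)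
  ultimately show "p \<noteq> [] \<and> set p \<subseteq> UU \<and> successively RR p \<and> RR (last p) (hd p)"
    using ne s by blast
next
  assume a: "p \<noteq> [] \<and> set p \<subseteq> UU \<and> successively RR p \<and> RR (last p) (hd p)"
  show "CP p" unfolding closed_path_def
  proof (intro conjI allI impI)
    show "p \<noteq> []" "set p \<subseteq> UU" using a by auto
    fix j assume j: "j < length p"
    show "RR (p ! j) (p ! ((j + 1) mod length p))"
    proof (cases "Suc j < length p")
      case True then show ?thesis using a successively_nth by fastforce
    next
      case False
      hence "j = length p - 1" using j by simp
      then show ?thesis using a j hd_conv_nth[of p] last_conv_nth[of p] by simp
    qed
  qed
qed

lemma closed_rotate1: "CP p \<Longrightarrow> CP (rotate1 p)"
proof -
  assume c: "CP p"
  then obtain x xs where p: "p = x # xs" unfolding closed_path_def by (cases p) auto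
  show "CP (rotate1 p)"
  proof (cases "xs = []")
    case True then show ?thesis using c p by simp
  next
    case False
    have "successively RR (x # xs)" "RR (last (x#xs)) (hd (x#xs))" "set (x#xs) \<subseteq> UU"
      using c p closed_alt by blast+
    then show ?thesis using False p
      by (simp add: closed_alt successively_append_iff successively_Cons)
  qed
qed

lemma closed_rotate: "CP p \<Longrightarrow> CP (rotate k p)"
  by (induction k) (simp_all add: closed_rotate1)

lemma finite_Wk: "finite (Wk N k)"
proof (rule finite_subset)
  show "Wk N k \<subseteq> {xs. set xs \<subseteq> UU \<and> length xs = N}"
    unfolding Wk_def closed_path_def by auto
  show "finite {xs. set xs \<subseteq> UU \<and> length xs = N}"
    by (rule finite_lists_length_eq) (simp add: finV finA)
qed

lemma Wk_rotate: "p \<in> Wk N k \<Longrightarrow> rotate j p \<in> Wk N k"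
  unfolding Wk_def by (simp add: closed_rotate idx_rotate nI_rotate)

lemma nI0_iff: "set p \<subseteq> UU \<Longrightarrow> nI p = 0 \<longleftrightarrow> set p \<subseteq> Inl ` A"
  unfolding nI_def by (force simp: filter_empty_conv)

lemma idx_filter: "idx (filter isl p) = idx p"
proof (induction p)
  case (Cons a p) then show ?case by (cases a) (auto simp: idx_def)
qed (simp add: idx_def)

lemma loops_chain:
  "successively RR p \<Longrightarrow> p \<noteq> [] \<Longrightarrow> filter isl p = [] \<Longrightarrow> arc_tgt tgt (last p) = arc_src src (hd p)"
proof (induction p)
  case (Cons a p)
  obtain v where a: "a = Inr v" using Cons.prems by (cases a) auto
  show ?case
  proof (cases "p = []")
    case True then show ?thesis using a by simp
  next
    case False
    then show ?thesis using Cons a by (auto simp: successively_Cons)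
  qed
qed simp

lemma filt_chain:
  "successively RR p \<Longrightarrow> filter isl p \<noteq> [] \<Longrightarrow>
    successively RR (filter isl p) \<and> arc_src src (hd (filter isl p)) = arc_src src (hd p)
    \<and> arc_tgt tgt (last (filter isl p)) = arc_tgt tgt (last p)"
proof (induction p)
  case (Cons a p)
  show ?case
  proof (cases "isl a")
    case True
    show ?thesis
    proof (cases "filter isl p = []")
      case fe: True
      show ?thesis
      proof (cases "p = []")
        case True then show ?thesis using \<open>isl a\<close> by simp
      next
        case False
        have "arc_tgt tgt (last p) = arc_src src (hd p)"
          using loops_chain[of p] Cons.prems False fe by (simp add: successively_Cons)
        then show ?thesis using Cons.prems False fe \<open>isl a\<close> by (simp add: successively_Cons)
      qed
    next
      case fne: False
      hence pne: "p \<noteq> []" by auto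
      have sp: "successively RR p" using Cons.prems pne by (simp add: successively_Cons)
      have IH: "successively RR (filter isl p) \<and> arc_src src (hd (filter isl p)) = arc_src src (hd p)
        \<and> arc_tgt tgt (last (filter isl p)) = arc_tgt tgt (last p)"
        using Cons.IH[OF sp fne] .
      then show ?thesis using Cons.prems fne pne \<open>isl a\<close> by (simp add: successively_Cons)
    qed
  next
    case False
    then obtain v where a: "a = Inr v" by (cases a) auto
    have fne: "filter isl p \<noteq> []" using Cons.prems a by simp
    hence pne: "p \<noteq> []" by auto
    have sp: "successively RR p" using Cons.prems pne by (simp add: successively_Cons)
    have IH: "successively RR (filter isl p) \<and> arc_src src (hd (filter isl p)) = arc_src src (hd p)
        \<and> arc_tgt tgt (last (filter isl p)) = arc_tgt tgt (last p)"
      using Cons.IH[OF sp fne] .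
    then show ?thesis using Cons.prems fne pne a by (simp add: successively_Cons)
  qed
qed simp

lemma deletion:
  assumes c: "CP p" and i: "idx p = m"
  shows "CP (filter isl p) \<and> set (filter isl p) \<subseteq> Inl ` A \<and> idx (filter isl p) = m
         \<and> length (filter isl p) = length p - nI p"
proof -
  have ne: "filter isl p \<noteq> []"
  proof
    assume "filter isl p = []"
    hence "idx (filter isl p) = 0" by (simp add: idx_def)
    thus False using idx_filter i m_nz by simp
  qed
  have a: "p \<noteq> []" "set p \<subseteq> UU" "successively RR p" "RR (last p) (hd p)"
    using c closed_alt by blast+
  have f: "successively RR (filter isl p) \<and> arc_src src (hd (filter isl p)) = arc_src src (hd p)
    \<and> arc_tgt tgt (last (filter isl p)) = arc_tgt tgt (last p)"
    using filt_chain a ne by blast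
  have s: "set (filter isl p) \<subseteq> Inl ` A" using a(2) by auto
  have "CP (filter isl p)" unfolding closed_alt using ne s f a by auto
  moreover have "length (filter isl p) = length p - nI p"
    using sum_length_filter_compl[of isl p] unfolding nI_def by simp
  ultimately show ?thesis using s idx_filter i by simp
qed

lemma src_hd_V: "CP q \<Longrightarrow> arc_src src (hd q) \<in> V"
proof -
  assume "CP q"
  hence "hd q \<in> UU" unfolding closed_path_def using hd_in_set by blast
  thus ?thesis using Ax by auto
qed

lemma ins_closed: "CP q \<Longrightarrow> CP (ins q)"
  using src_hd_V[of q] unfolding ins_def closed_alt
  by (auto simp: successively_Cons)

lemma ins_props: "q \<noteq> [] \<Longrightarrow> idx (ins q) = idx q \<and> nI (ins q) = Suc (nI q) \<and> wt (ins q) = f0 q * wt q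
   \<and> h1l (ins q) = f0 q + h1l q \<and> length (ins q) = Suc (length q) \<and> \<not> isl (hd (ins q))
   \<and> tl (ins q) = q"
  unfolding ins_def idx_def nI_def wt_def f0_def h1l_def by simp

lemma tl_closed:
  assumes c: "CP p" and h: "\<not> isl (hd p)" and l: "length p \<ge> 2"
  shows "CP (tl p) \<and> ins (tl p) = p"
proof -
  obtain v r where p: "p = Inr v # r" using h c unfolding closed_path_def
    by (cases p; auto)
  have rne: "r \<noteq> []" using l p by auto
  have a: "set p \<subseteq> UU" "successively RR p" "RR (last p) (hd p)"
    using c closed_alt by blast+
  have v: "v = arc_src src (hd r)" using a(2) p rne by (simp add: successively_Cons)
  have "CP r" unfolding closed_alt using a p rne v by (auto simp: successively_Cons)
  then show ?thesis using p v by (simp add: ins_def)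
qed

lemma step4:
  assumes N: "N \<ge> 1"
  shows "(\<Sum>p\<in>Wk (Suc N) (Suc k). if \<not> isl (hd p) then F p else 0) = (\<Sum>q\<in>Wk N k. F (ins q))"
proof -
  have "(\<Sum>p\<in>Wk (Suc N) (Suc k). if \<not> isl (hd p) then F p else 0)
      = (\<Sum>p\<in>{p\<in>Wk (Suc N) (Suc k). \<not> isl (hd p)}. F p)"
    by (rule sum.inter_filter[symmetric]) (rule finite_Wk)
  also have "\<dots> = (\<Sum>q\<in>Wk N k. F (ins q))"
  proof (rule sum.reindex_bij_witness[of _ ins tl])
    fix q assume q: "q \<in> Wk N k"
    hence qne: "q \<noteq> []" unfolding Wk_def closed_path_def by auto
    show "tl (ins q) = q" by (simp add: ins_def)
    show "ins q \<in> {p \<in> Wk (Suc N) (Suc k). \<not> isl (hd p)}"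
      using q ins_props[OF qne] ins_closed unfolding Wk_def by auto
  next
    fix p assume p: "p \<in> {p \<in> Wk (Suc N) (Suc k). \<not> isl (hd p)}"
    hence c: "CP p" and h: "\<not> isl (hd p)" and l: "length p \<ge> 2"
      using N unfolding Wk_def by auto
    from tl_closed[OF c h l] have t: "CP (tl p)" "ins (tl p) = p" by auto
    show "ins (tl p) = p" using t by simp
    show "F (ins (tl p)) = F p" using t by simp
    have tne: "tl p \<noteq> []" using l by (cases p) auto
    have "idx (tl p) = m" "nI (tl p) = k" "length (tl p) = N"
      using ins_props[OF tne] t p unfolding Wk_def by auto
    then show "tl p \<in> Wk N k" using t unfolding Wk_def by auto
  qed
  finally show ?thesis .
qed

end


context GS begin

lemma rep_rot: "\<exists>j. rep (cyc p) = rotate j p"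
  using rep_in[of p] unfolding cyc_def by auto

lemma cyc_len_eq: "cyc_len (cyc p) = length p"
  using rep_rot[of p] unfolding cyc_len_def by auto
lemma cyc_index_eq: "cyc_index tau (cyc p) = idx p"
  using rep_rot[of p] idx_rotate unfolding cyc_index_def idx_def by metis
lemma cyc_weight_eq: "cyc_weight Q (cyc p) = wt p"
  using rep_rot[of p] wt_rotate unfolding cyc_weight_def wt_def by metis

lemma sum_if_const:
  "(\<Sum>j<(L::nat). if P j then x else 0) = of_nat (card {j. j < L \<and> P j}) * (x::complex)"
proof -
  have "(\<Sum>j<L. if P j then x else 0) = (\<Sum>j\<in>{j\<in>{..<L}. P j}. x)"
    using sum.inter_filter[of "{..<L}" "\<lambda>_. x" P] by simp
  also have "{j\<in>{..<L}. P j} = {j. j < L \<and> P j}" by auto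
  finally show ?thesis by simp
qed

lemma step3:
  assumes Gr: "\<And>p j. p \<in> Wk N k \<Longrightarrow> Gf (rotate j p) = Gf p"
  shows "(\<Sum>c\<in>cyc ` Wk N k. of_nat k * cyc_weight Q c * Gf (rep c))
       = (\<Sum>p\<in>Wk N k. if \<not> isl (hd p) then wt p * Gf p else 0)"
proof -
  have "(\<Sum>p\<in>Wk N k. if \<not> isl (hd p) then wt p * Gf p else 0)
      = (\<Sum>c\<in>cyc ` Wk N k. \<Sum>q\<in>c. if \<not> isl (hd q) then wt q * Gf q else 0)"
    by (rule orbit_sum[symmetric]) (auto simp: finite_Wk Wk_rotate)
  also have "\<dots> = (\<Sum>c\<in>cyc ` Wk N k. of_nat k * cyc_weight Q c * Gf (rep c))"
  proof (rule sum.cong[OF refl])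
    fix c assume "c \<in> cyc ` Wk N k"
    then obtain p where p: "p \<in> Wk N k" and c: "c = cyc p" by auto
    define r where "r = rep c"
    obtain j where rj: "r = rotate j p" using rep_rot[of p] unfolding r_def c by auto
    have rW: "r \<in> Wk N k" using rj p Wk_rotate by simp
    have cr: "c = cyc r" unfolding r_def c by (simp add: cyc_rep)
    have pr: "prime_path r" using rW idx_prime unfolding Wk_def by simp
    have rne: "r \<noteq> []" using prime_nonempty[OF pr] .
    have "(\<Sum>q\<in>c. if \<not> isl (hd q) then wt q * Gf q else 0)
        = (\<Sum>i<length r. if \<not> isl (hd (rotate i r)) then wt (rotate i r) * Gf (rotate i r) else 0)"
      unfolding cr by (rule sum_cyc[OF pr])
    also have "\<dots> = (\<Sum>i<length r. if \<not> isl (r ! i) then wt r * Gf r else 0)"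
      using rne by (intro sum.cong refl) (simp add: hd_rotate_conv_nth wt_rotate Gr[OF rW])
    also have "\<dots> = of_nat (card {i. i < length r \<and> \<not> isl (r ! i)}) * (wt r * Gf r)"
      by (rule sum_if_const)
    also have "card {i. i < length r \<and> \<not> isl (r ! i)} = k"
    proof -
      have "nI r = k" using rW by (simp add: Wk_def)
      then show ?thesis unfolding nI_def length_filter_conv_card .
    qed
    also have "wt r = cyc_weight Q c" unfolding cr cyc_weight_eq ..
    finally show "(\<Sum>q\<in>c. if \<not> isl (hd q) then wt q * Gf q else 0)
        = of_nat k * cyc_weight Q c * Gf (rep c)" unfolding r_def by simp
  qed
  finally show ?thesis by simp
qed

lemma h1_cyc_rep: "h1_cyc src Q c = h1l (rep c)"
  unfolding h1_cyc_def h1l_def Let_def by (simp add: sum_list_sum_nth atLeast0LessThan)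

lemma sq_identity:
  fixes x :: "nat \<Rightarrow> complex"
  shows "2 * (\<Sum>j<L. \<Sum>l\<in>{j..<L}. x j * x l) = (\<Sum>j<L. x j * (x j + (\<Sum>i<L. x i)))"
proof (induction L)
  case (Suc L)
  have a: "(\<Sum>j<Suc L. \<Sum>l\<in>{j..<Suc L}. x j * x l)
      = (\<Sum>j<L. \<Sum>l\<in>{j..<L}. x j * x l) + (\<Sum>j<L. x j * x L) + x L * x L"
  proof -
    have "(\<Sum>j<Suc L. \<Sum>l\<in>{j..<Suc L}. x j * x l)
        = (\<Sum>j<L. \<Sum>l\<in>{j..<Suc L}. x j * x l) + x L * x L" by simp
    also have "(\<Sum>j<L. \<Sum>l\<in>{j..<Suc L}. x j * x l) = (\<Sum>j<L. (\<Sum>l\<in>{j..<L}. x j * x l) + x j * x L)"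
      by (intro sum.cong refl) simp
    finally show ?thesis by (simp add: sum.distrib)
  qed
  have b: "(\<Sum>j<Suc L. x j * (x j + (\<Sum>i<Suc L. x i)))
      = (\<Sum>j<L. x j * (x j + (\<Sum>i<L. x i))) + (\<Sum>j<L. x j) * x L + x L * (x L + (\<Sum>i<L. x i) + x L)"
    by (simp add: algebra_simps sum.distrib sum_distrib_left sum_distrib_right)
  have c: "(\<Sum>j<L. x j * x L) = (\<Sum>j<L. x j) * x L" by (simp add: sum_distrib_right)
  show ?case unfolding a b c Suc.IH[symmetric] by (simp add: algebra_simps)
qed simp

lemma cyc_sums:
  assumes "idx p = m"
  shows "h1_cyc src Q (cyc p) = (\<Sum>q\<in>cyc p. f0 q)"
    and "2 * h2_cyc src Q (cyc p) = (\<Sum>q\<in>cyc p. f0 q * (f0 q + h1l q))"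
proof -
  define r where "r = rep (cyc p)"
  obtain j where rj: "r = rotate j p" using rep_rot[of p] unfolding r_def by auto
  have ir: "idx r = m" using rj assms idx_rotate by simp
  have cr: "cyc p = cyc r" unfolding r_def by (simp add: cyc_rep)
  have pr: "prime_path r" using ir idx_prime by simp
  have rne: "r \<noteq> []" using prime_nonempty[OF pr] .
  define x where "x i = Q (arc_src src (r ! i))" for i
  have hr: "h1l r = (\<Sum>i<length r. x i)"
    unfolding h1l_def x_def by (simp add: sum_list_sum_nth atLeast0LessThan)
  have f0r: "\<And>i. i < length r \<Longrightarrow> f0 (rotate i r) = x i"
    unfolding f0_def x_def using rne by (simp add: hd_rotate_conv_nth)
  have "(\<Sum>q\<in>cyc p. f0 q) = (\<Sum>i<length r. f0 (rotate i r))" unfolding cr by (rule sum_cyc[OF pr])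
  also have "\<dots> = (\<Sum>i<length r. x i)" by (intro sum.cong refl) (simp add: f0r)
  finally have s1: "(\<Sum>q\<in>cyc p. f0 q) = (\<Sum>i<length r. x i)" .
  show "h1_cyc src Q (cyc p) = (\<Sum>q\<in>cyc p. f0 q)"
    unfolding s1 h1_cyc_rep r_def[symmetric] hr ..
  have "(\<Sum>q\<in>cyc p. f0 q * (f0 q + h1l q)) = (\<Sum>i<length r. f0 (rotate i r) * (f0 (rotate i r) + h1l (rotate i r)))"
    unfolding cr by (rule sum_cyc[OF pr])
  also have "\<dots> = (\<Sum>i<length r. x i * (x i + (\<Sum>i<length r. x i)))"
    by (intro sum.cong refl) (simp add: f0r h1l_rotate hr)
  also have "\<dots> = 2 * (\<Sum>j<length r. \<Sum>l\<in>{j..<length r}. x j * x l)"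
    by (rule sq_identity[symmetric])
  also have "(\<Sum>j<length r. \<Sum>l\<in>{j..<length r}. x j * x l) = h2_cyc src Q (cyc p)"
    unfolding h2_cyc_def Let_def r_def[symmetric] x_def by simp
  finally show "2 * h2_cyc src Q (cyc p) = (\<Sum>q\<in>cyc p. f0 q * (f0 q + h1l q))" by simp
qed

lemma Plm_eq: "P_lm V A src tgt tau l m = cyc ` Wk l 0"
proof
  show "P_lm V A src tgt tau l m \<subseteq> cyc ` Wk l 0"
  proof
    fix c assume "c \<in> P_lm V A src tgt tau l m"
    then obtain p where c: "c = cyc p" and p: "CP p" "set p \<subseteq> Inl ` A"
      and l: "cyc_len c = l" "cyc_index tau c = m"
      unfolding P_lm_def prime_cycles_def by auto
    have "nI p = 0" using p nI0_iff[of p] unfolding closed_path_def by auto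
    then show "c \<in> cyc ` Wk l 0" using c p l
      unfolding Wk_def by (auto simp: cyc_len_eq cyc_index_eq)
  qed
  show "cyc ` Wk l 0 \<subseteq> P_lm V A src tgt tau l m"
  proof
    fix c assume "c \<in> cyc ` Wk l 0"
    then obtain p where c: "c = cyc p" and p: "p \<in> Wk l 0" by auto
    have s: "set p \<subseteq> Inl ` A" using p nI0_iff[of p] unfolding Wk_def closed_path_def by auto
    have "prime_path p" using p idx_prime unfolding Wk_def by simp
    then show "c \<in> P_lm V A src tgt tau l m" using c p s
      unfolding P_lm_def prime_cycles_def Wk_def by (auto simp: cyc_len_eq cyc_index_eq)
  qed
qed

definition Dset where
  "Dset N = {c \<in> prime_cycles_mod V A src tgt - prime_cycles V A src tgt.
              cyc_len c = N \<and> cyc_index tau c = m}"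

lemma D_eq: "Dset N = cyc ` {p. CP p \<and> length p = N \<and> idx p = m \<and> nI p \<ge> 1}"
proof
  show "Dset N \<subseteq> cyc ` {p. CP p \<and> length p = N \<and> idx p = m \<and> nI p \<ge> 1}"
  proof
    fix c assume cD: "c \<in> Dset N"
    then obtain p where c: "c = cyc p" and p: "CP p" "prime_path p"
      and l: "cyc_len c = N" "cyc_index tau c = m"
      unfolding Dset_def prime_cycles_mod_def by auto
    have "nI p \<noteq> 0"
    proof
      assume "nI p = 0"
      hence "set p \<subseteq> Inl ` A" using p nI0_iff[of p] unfolding closed_path_def by auto
      hence "c \<in> prime_cycles V A src tgt" using c p unfolding prime_cycles_def by auto
      thus False using cD unfolding Dset_def by auto
    qed
    then show "c \<in> cyc ` {p. CP p \<and> length p = N \<and> idx p = m \<and> nI p \<ge> 1}"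
      using c p l by (auto simp: cyc_len_eq cyc_index_eq)
  qed
  show "cyc ` {p. CP p \<and> length p = N \<and> idx p = m \<and> nI p \<ge> 1} \<subseteq> Dset N"
  proof
    fix c assume "c \<in> cyc ` {p. CP p \<and> length p = N \<and> idx p = m \<and> nI p \<ge> 1}"
    then obtain p where c: "c = cyc p" and p: "CP p" "length p = N" "idx p = m" "nI p \<ge> 1" by auto
    have pr: "prime_path p" using p idx_prime by simp
    have "c \<notin> prime_cycles V A src tgt"
    proof
      assume "c \<in> prime_cycles V A src tgt"
      then obtain p' where c': "c = cyc p'" and s': "set p' \<subseteq> Inl ` A"
        unfolding prime_cycles_def by auto
      have "p \<in> cyc p'" using c c' self_in_cyc by metis
      then obtain j where "p = rotate j p'" unfolding cyc_def by auto
      hence "set p \<subseteq> Inl ` A" using s' by simp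
      hence "nI p = 0" using nI0_iff[of p] p(1) unfolding closed_path_def by auto
      thus False using p by simp
    qed
    then show "c \<in> Dset N" using c p pr unfolding Dset_def prime_cycles_mod_def
      by (auto simp: cyc_len_eq cyc_index_eq)
  qed
qed

lemma Iinv_eq:
  assumes N: "N \<ge> 1"
  shows "I_inv V A src tgt tau N m Q = (\<Sum>c\<in>Dset N. cyc_weight Q c)"
proof -
  have S: "{(c, r). c \<in> prime_cycles_mod V A src tgt - prime_cycles V A src tgt \<and>
             r \<in> {1..N} \<and> r * cyc_len c = N \<and> (\<chi> i. int r * cyc_index tau c $ i) = m}
         = (\<lambda>c. (c, 1::nat)) ` Dset N"
  proof (intro set_eqI iffI)
    fix x assume "x \<in> {(c, r). c \<in> prime_cycles_mod V A src tgt - prime_cycles V A src tgt \<and>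
             r \<in> {1..N} \<and> r * cyc_len c = N \<and> (\<chi> i. int r * cyc_index tau c $ i) = m}"
    then obtain c r where x: "x = (c, r)" and h: "c \<in> prime_cycles_mod V A src tgt - prime_cycles V A src tgt"
      "r * cyc_len c = N" "(\<chi> i. int r * cyc_index tau c $ i) = m" by auto
    have r: "r = 1" using r_one[OF h(3)] .
    have "cyc_index tau c = m" using h(3) unfolding r by (simp add: vec_eq_iff)
    then show "x \<in> (\<lambda>c. (c, 1::nat)) ` Dset N" using x h r unfolding Dset_def by auto
  next
    fix x assume "x \<in> (\<lambda>c. (c, 1::nat)) ` Dset N"
    then show "x \<in> {(c, r). c \<in> prime_cycles_mod V A src tgt - prime_cycles V A src tgt \<and>
             r \<in> {1..N} \<and> r * cyc_len c = N \<and> (\<chi> i. int r * cyc_index tau c $ i) = m}"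
      using N unfolding Dset_def by (auto simp: vec_eq_iff)
  qed
  show ?thesis unfolding I_inv_def S by (subst sum.reindex) (auto simp: inj_on_def)
qed

lemma wt_one: "nI q = 0 \<Longrightarrow> wt q = 1"
  unfolding nI_def wt_def
proof (induction q)
  case (Cons a q) then show ?case by (cases a) auto
qed simp

lemma cycW1:
  assumes N: "N \<ge> 1"
  shows "(\<Sum>c\<in>cyc ` Wk (Suc N) 1. cyc_weight Q c) = (\<Sum>q\<in>Wk N 0. f0 q)"
proof -
  have "(\<Sum>c\<in>cyc ` Wk (Suc N) 1. cyc_weight Q c)
      = (\<Sum>c\<in>cyc ` Wk (Suc N) 1. of_nat 1 * cyc_weight Q c * (\<lambda>_. 1) (rep c))" by simp
  also have "\<dots> = (\<Sum>p\<in>Wk (Suc N) (Suc 0). if \<not> isl (hd p) then wt p * 1 else 0)"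
    using step3[of "Suc N" 1 "\<lambda>_. 1"] by simp
  also have "\<dots> = (\<Sum>q\<in>Wk N 0. wt (ins q) * 1)" by (rule step4[OF N])
  also have "\<dots> = (\<Sum>q\<in>Wk N 0. f0 q)"
  proof (intro sum.cong refl)
    fix q assume q: "q \<in> Wk N 0"
    hence "q \<noteq> []" unfolding Wk_def closed_path_def by auto
    then show "wt (ins q) * 1 = f0 q" using ins_props[of q] wt_one[of q] q unfolding Wk_def by simp
  qed
  finally show ?thesis .
qed

lemma P_h1:
  "(\<Sum>c\<in>P_lm V A src tgt tau N m. h1_cyc src Q c) = (\<Sum>q\<in>Wk N 0. f0 q)"
proof -
  have "(\<Sum>c\<in>P_lm V A src tgt tau N m. h1_cyc src Q c) = (\<Sum>c\<in>cyc ` Wk N 0. \<Sum>q\<in>c. f0 q)"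
    unfolding Plm_eq
    by (intro sum.cong refl) (auto simp: cyc_sums(1) Wk_def)
  also have "\<dots> = (\<Sum>q\<in>Wk N 0. f0 q)"
    by (rule orbit_sum) (auto simp: finite_Wk Wk_rotate)
  finally show ?thesis .
qed

lemma P_h2:
  "2 * (\<Sum>c\<in>P_lm V A src tgt tau N m. h2_cyc src Q c) = (\<Sum>q\<in>Wk N 0. f0 q * (f0 q + h1l q))"
proof -
  have "2 * (\<Sum>c\<in>P_lm V A src tgt tau N m. h2_cyc src Q c)
      = (\<Sum>c\<in>cyc ` Wk N 0. 2 * h2_cyc src Q c)"
    unfolding Plm_eq by (simp add: sum_distrib_left)
  also have "\<dots> = (\<Sum>c\<in>cyc ` Wk N 0. \<Sum>q\<in>c. f0 q * (f0 q + h1l q))"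
    by (intro sum.cong refl) (auto simp: cyc_sums(2) Wk_def)
  also have "\<dots> = (\<Sum>q\<in>Wk N 0. f0 q * (f0 q + h1l q))"
    by (rule orbit_sum) (auto simp: finite_Wk Wk_rotate)
  finally show ?thesis .
qed

lemma cycW2:
  assumes N: "N \<ge> 1"
  shows "2 * (\<Sum>c\<in>cyc ` Wk (Suc (Suc N)) 2. cyc_weight Q c) = (\<Sum>q\<in>Wk N 0. f0 q * (f0 q + h1l q))"
proof -
  have "2 * (\<Sum>c\<in>cyc ` Wk (Suc (Suc N)) 2. cyc_weight Q c)
      = (\<Sum>c\<in>cyc ` Wk (Suc (Suc N)) 2. of_nat 2 * cyc_weight Q c * (\<lambda>_. 1) (rep c))"
    by (simp add: sum_distrib_left)
  also have "\<dots> = (\<Sum>p\<in>Wk (Suc (Suc N)) (Suc 1). if \<not> isl (hd p) then wt p * 1 else 0)"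
    using step3[of "Suc (Suc N)" 2 "\<lambda>_. 1"] by (simp add: numeral_2_eq_2)
  also have "\<dots> = (\<Sum>q\<in>Wk (Suc N) 1. wt (ins q) * 1)" by (rule step4) (use N in simp)
  also have "\<dots> = (\<Sum>q\<in>Wk (Suc N) 1. f0 q * wt q)"
  proof (intro sum.cong refl)
    fix q assume q: "q \<in> Wk (Suc N) 1"
    hence "q \<noteq> []" unfolding Wk_def closed_path_def by auto
    then show "wt (ins q) * 1 = f0 q * wt q" using ins_props[of q] by simp
  qed
  also have "\<dots> = (\<Sum>c\<in>cyc ` Wk (Suc N) 1. \<Sum>q\<in>c. f0 q * wt q)"
    by (rule orbit_sum[symmetric]) (auto simp: finite_Wk Wk_rotate)
  also have "\<dots> = (\<Sum>c\<in>cyc ` Wk (Suc N) 1. of_nat 1 * cyc_weight Q c * h1l (rep c))"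
  proof (intro sum.cong refl)
    fix c assume "c \<in> cyc ` Wk (Suc N) 1"
    then obtain p where c: "c = cyc p" and p: "p \<in> Wk (Suc N) 1" by auto
    have "(\<Sum>q\<in>c. f0 q * wt q) = (\<Sum>q\<in>c. f0 q * wt p)"
      unfolding c by (intro sum.cong refl) (auto simp: cyc_def wt_rotate)
    also have "\<dots> = wt p * (\<Sum>q\<in>c. f0 q)" by (simp add: sum_distrib_left mult.commute)
    also have "(\<Sum>q\<in>c. f0 q) = h1l (rep c)"
      using cyc_sums(1)[of p] p h1_cyc_rep unfolding c Wk_def by simp
    finally show "(\<Sum>q\<in>c. f0 q * wt q) = of_nat 1 * cyc_weight Q c * h1l (rep c)"
      unfolding c cyc_weight_eq by simp
  qed
  also have "\<dots> = (\<Sum>p\<in>Wk (Suc N) (Suc 0). if \<not> isl (hd p) then wt p * h1l p else 0)"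
    using step3[of "Suc N" 1 h1l] h1l_rotate by simp
  also have "\<dots> = (\<Sum>q\<in>Wk N 0. wt (ins q) * h1l (ins q))" by (rule step4[OF N])
  also have "\<dots> = (\<Sum>q\<in>Wk N 0. f0 q * (f0 q + h1l q))"
  proof (intro sum.cong refl)
    fix q assume q: "q \<in> Wk N 0"
    hence "q \<noteq> []" unfolding Wk_def closed_path_def by auto
    then show "wt (ins q) * h1l (ins q) = f0 q * (f0 q + h1l q)"
      using ins_props[of q] wt_one[of q] q unfolding Wk_def by (simp add: add.commute)
  qed
  finally show ?thesis .
qed

end


context GS begin

lemma parity_chain:
  fixes f :: "'v \<times> (int ^ 'd) \<Rightarrow> bool"
  assumes f: "\<forall>x\<in>V \<times> UNIV. \<forall>y\<in>V \<times> UNIV. periodic_adj A src tgt tau x y \<longrightarrow> f x \<noteq> f y"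
  shows "q \<noteq> [] \<Longrightarrow> set q \<subseteq> Inl ` A \<Longrightarrow> successively RR q \<Longrightarrow>
    (f (arc_tgt tgt (last q), z + idx q) = f (arc_src src (hd q), z)) = even (length q)"
proof (induction q arbitrary: z)
  case (Cons a q)
  obtain e where a: "a = Inl e" and e: "e \<in> A" using Cons.prems by auto
  have adj: "f (tgt e, z + tau e) \<noteq> f (src e, z)"
  proof -
    have "periodic_adj A src tgt tau (src e, z) (tgt e, z + tau e)"
      unfolding periodic_adj_def using e by auto
    then show ?thesis using f Ax[OF e] by fastforce
  qed
  show ?case
  proof (cases "q = []")
    case True then show ?thesis using a adj by (auto simp: idx_def)
  next
    case False
    have r: "tgt e = arc_src src (hd q)" "successively RR q"
      using Cons.prems False a by (auto simp: successively_Cons)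
    have IH: "(f (arc_tgt tgt (last q), (z + tau e) + idx q) = f (arc_src src (hd q), z + tau e)) = even (length q)"
      using Cons.IH[of "z + tau e"] Cons.prems False r by auto
    have X: "(f (arc_tgt tgt (last (a # q)), z + idx (a # q)) = f (arc_src src (hd (a # q)), z))
       = (f (arc_tgt tgt (last q), z + tau e + idx q) = f (src e, z))"
      using False a by (simp add: idx_def add.assoc)
    have adj': "f (arc_src src (hd q), z + tau e) \<noteq> f (src e, z)" using adj r(1) by simp
    show ?thesis unfolding X length_Cons even_Suc
      by (cases "f (arc_src src (hd q), z + tau e)"; cases "f (src e, z)";
          cases "f (arc_tgt tgt (last q), z + tau e + idx q)") (use IH adj' in auto)
  qed
qed simp

lemma parity_closed:
  fixes f :: "'v \<times> (int ^ 'd) \<Rightarrow> bool"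
  assumes f: "\<forall>x\<in>V \<times> UNIV. \<forall>y\<in>V \<times> UNIV. periodic_adj A src tgt tau x y \<longrightarrow> f x \<noteq> f y"
    and q: "q \<in> Wk N 0"
  shows "(f (arc_src src (hd q), z + m) = f (arc_src src (hd q), z)) = even N"
proof -
  have c: "CP q" and l: "length q = N" and i: "idx q = m" and n0: "nI q = 0" using q unfolding Wk_def by auto
  have a: "q \<noteq> []" "set q \<subseteq> UU" "successively RR q" "RR (last q) (hd q)"
    using c closed_alt by blast+
  have s: "set q \<subseteq> Inl ` A" using nI0_iff a n0 by blast
  show ?thesis using parity_chain[OF f a(1) s a(3), of z] a(4) i l by simp
qed

lemma shift_rtrancl:
  fixes f :: "'v \<times> (int ^ 'd) \<Rightarrow> bool"
  assumes f: "\<forall>x\<in>V \<times> UNIV. \<forall>y\<in>V \<times> UNIV. periodic_adj A src tgt tau x y \<longrightarrow> f x \<noteq> f y"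
    and r: "(x, y) \<in> {(a, b). periodic_adj A src tgt tau a b}\<^sup>*"
  shows "(f (fst x, snd x + s) = f x) = (f (fst y, snd y + s) = f y)"
  using r
proof (induction rule: rtrancl_induct)
  case (step y y')
  have adj: "periodic_adj A src tgt tau y y'" using step by simp
  then obtain e where e: "e \<in> A" "src e = fst y" "tgt e = fst y'" "snd y' = snd y + tau e"
    unfolding periodic_adj_def by auto
  have inV: "y \<in> V \<times> UNIV" "y' \<in> V \<times> UNIV" using Ax[OF e(1)] e by (auto simp: mem_Times_iff)
  have adj2: "periodic_adj A src tgt tau (fst y, snd y + s) (fst y', snd y' + s)"
    unfolding periodic_adj_def using e by (auto simp: algebra_simps intro!: bexI[of _ e])
  have "f y \<noteq> f y'" using f inV adj by blast
  moreover have "f (fst y, snd y + s) \<noteq> f (fst y', snd y' + s)"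
    using f inV adj2 by (auto simp: mem_Times_iff)
  ultimately show ?case using step.IH
    by (cases "f y"; cases "f y'"; cases "f (fst y, snd y + s)"; cases "f (fst y', snd y' + s)") auto
qed simp

context
  fixes n :: nat
  assumes ex: "\<exists>p. CP p \<and> set p \<subseteq> Inl ` A \<and> sum_list (map (arc_tau tau) p) = m"
    and n_def: "n = shortest_len V A src tgt tau m"
begin

lemma n_ex: "\<exists>p. CP p \<and> set p \<subseteq> Inl ` A \<and> length p = n \<and> sum_list (map (arc_tau tau) p) = m"
  unfolding n_def shortest_len_def by (rule LeastI_ex) (use ex in blast)

lemma n_le: "CP p \<Longrightarrow> set p \<subseteq> Inl ` A \<Longrightarrow> idx p = m \<Longrightarrow> n \<le> length p"
  unfolding n_def shortest_len_def idx_def by (rule Least_le) blast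

lemma Wn0: "\<exists>q. q \<in> Wk n 0"
proof -
  obtain p where p: "CP p" "set p \<subseteq> Inl ` A" "length p = n" "sum_list (map (arc_tau tau) p) = m"
    using n_ex by blast
  have "set p \<subseteq> UU" using p(1) unfolding closed_path_def by simp
  hence "nI p = 0" using nI0_iff[of p] p(2) by simp
  hence "p \<in> Wk n 0" using p unfolding Wk_def idx_def by simp
  thus ?thesis by blast
qed

lemma n_pos: "n \<ge> 1"
proof -
  obtain q where q: "q \<in> Wk n 0" using Wn0 by blast
  hence "q \<noteq> []" "length q = n" unfolding Wk_def closed_path_def by auto
  thus ?thesis by (cases q) auto
qed

lemma loop_bound: "CP p \<Longrightarrow> idx p = m \<Longrightarrow> n \<le> length p - nI p"
proof -
  assume c: "CP p" and i: "idx p = m"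
  note d = deletion[OF c i]
  have "n \<le> length (filter isl p)" using n_le[of "filter isl p"] d by blast
  thus ?thesis using d by simp
qed

lemma W1: "{p. CP p \<and> length p = Suc n \<and> idx p = m \<and> nI p \<ge> 1} = Wk (Suc n) 1"
proof (intro set_eqI iffI)
  fix p assume "p \<in> {p. CP p \<and> length p = Suc n \<and> idx p = m \<and> nI p \<ge> 1}"
  hence h: "CP p" "length p = Suc n" "idx p = m" "1 \<le> nI p" by auto
  have "n \<le> length p - nI p" using loop_bound[OF h(1) h(3)] .
  hence "nI p = 1" using h(2) h(4) n_pos by linarith
  then show "p \<in> Wk (Suc n) 1" using h unfolding Wk_def by auto
next
  fix p assume "p \<in> Wk (Suc n) 1"
  then show "p \<in> {p. CP p \<and> length p = Suc n \<and> idx p = m \<and> nI p \<ge> 1}"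
    unfolding Wk_def by auto
qed

lemma W2: "{p. CP p \<and> length p = Suc (Suc n) \<and> idx p = m \<and> nI p \<ge> 1} = Wk (Suc (Suc n)) 1 \<union> Wk (Suc (Suc n)) 2"
proof -
  have le2: "nI p \<le> 2" if "CP p" "length p = Suc (Suc n)" "idx p = m" for p
    using loop_bound[OF that(1,3)] n_pos that(2) by linarith
  show ?thesis
  proof (intro set_eqI iffI)
    fix p assume "p \<in> {p. CP p \<and> length p = Suc (Suc n) \<and> idx p = m \<and> nI p \<ge> 1}"
    hence h: "CP p" "length p = Suc (Suc n)" "idx p = m" "1 \<le> nI p" by auto
    hence "nI p = 1 \<or> nI p = 2" using le2[OF h(1-3)] by linarith
    then show "p \<in> Wk (Suc (Suc n)) 1 \<union> Wk (Suc (Suc n)) 2" using h unfolding Wk_def by auto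
  next
    fix p assume "p \<in> Wk (Suc (Suc n)) 1 \<union> Wk (Suc (Suc n)) 2"
    then show "p \<in> {p. CP p \<and> length p = Suc (Suc n) \<and> idx p = m \<and> nI p \<ge> 1}"
      unfolding Wk_def by auto
  qed
qed

lemma cyc_nI: "cyc p = cyc q \<Longrightarrow> nI p = nI q"
proof -
  assume "cyc p = cyc q"
  hence "q \<in> cyc p" using self_in_cyc[of q] by simp
  then obtain j where "q = rotate j p" unfolding cyc_def by auto
  thus ?thesis by (simp add: nI_rotate)
qed

lemma main:
  "I_inv V A src tgt tau (n + 1) m Q = (\<Sum>c\<in>P_lm V A src tgt tau n m. h1_cyc src Q c)
     \<and> I_inv V A src tgt tau (n + 2) m Q =
         (\<Sum>c\<in>P_lm V A src tgt tau n m. h2_cyc src Q c)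
         + (\<Sum>c\<in>P_lm V A src tgt tau (n + 1) m. h1_cyc src Q c)
     \<and> (periodic_bipartite V A src tgt tau \<longrightarrow>
          P_lm V A src tgt tau (n + 1) m = {} \<and>
          I_inv V A src tgt tau (n + 2) m Q = (\<Sum>c\<in>P_lm V A src tgt tau n m. h2_cyc src Q c))"
proof -
  have npos: "n \<ge> 1" by (rule n_pos)
  have e1: "I_inv V A src tgt tau (n + 1) m Q = (\<Sum>c\<in>P_lm V A src tgt tau n m. h1_cyc src Q c)"
  proof -
    have d1: "Dset (Suc n) = cyc ` Wk (Suc n) 1" by (subst D_eq) (subst W1, rule refl)
    have "I_inv V A src tgt tau (Suc n) m Q = (\<Sum>c\<in>Dset (Suc n). cyc_weight Q c)"
      by (rule Iinv_eq) simp
    hence "I_inv V A src tgt tau (Suc n) m Q = (\<Sum>c\<in>cyc ` Wk (Suc n) 1. cyc_weight Q c)"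
      unfolding d1 .
    hence "I_inv V A src tgt tau (n + 1) m Q = (\<Sum>c\<in>cyc ` Wk (Suc n) 1. cyc_weight Q c)"
      by simp
    also have "\<dots> = (\<Sum>q\<in>Wk n 0. f0 q)" by (rule cycW1[OF npos])
    also have "\<dots> = (\<Sum>c\<in>P_lm V A src tgt tau n m. h1_cyc src Q c)" by (rule P_h1[symmetric])
    finally show ?thesis .
  qed
  have e2: "I_inv V A src tgt tau (n + 2) m Q =
         (\<Sum>c\<in>P_lm V A src tgt tau n m. h2_cyc src Q c)
         + (\<Sum>c\<in>P_lm V A src tgt tau (n + 1) m. h1_cyc src Q c)"
  proof -
    have d2: "Dset (Suc (Suc n)) = cyc ` Wk (Suc (Suc n)) 1 \<union> cyc ` Wk (Suc (Suc n)) 2"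
      by (subst D_eq) (subst W2, rule image_Un)
    have "I_inv V A src tgt tau (Suc (Suc n)) m Q = (\<Sum>c\<in>Dset (Suc (Suc n)). cyc_weight Q c)"
      by (rule Iinv_eq) simp
    hence "I_inv V A src tgt tau (Suc (Suc n)) m Q
        = (\<Sum>c\<in>cyc ` Wk (Suc (Suc n)) 1 \<union> cyc ` Wk (Suc (Suc n)) 2. cyc_weight Q c)"
      unfolding d2 .
    hence "I_inv V A src tgt tau (n + 2) m Q
        = (\<Sum>c\<in>cyc ` Wk (Suc (Suc n)) 1 \<union> cyc ` Wk (Suc (Suc n)) 2. cyc_weight Q c)"
      by (simp only: numeral_2_eq_2 add_Suc_right add_0_right)
    also have "\<dots> = (\<Sum>c\<in>cyc ` Wk (Suc (Suc n)) 1. cyc_weight Q c) + (\<Sum>c\<in>cyc ` Wk (Suc (Suc n)) 2. cyc_weight Q c)"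
    proof (rule sum.union_disjoint)
      show "finite (cyc ` Wk (Suc (Suc n)) 1)" "finite (cyc ` Wk (Suc (Suc n)) 2)"
        by (simp_all add: finite_Wk)
      show "cyc ` Wk (Suc (Suc n)) 1 \<inter> cyc ` Wk (Suc (Suc n)) 2 = {}"
      proof (rule equals0I)
        fix c assume "c \<in> cyc ` Wk (Suc (Suc n)) 1 \<inter> cyc ` Wk (Suc (Suc n)) 2"
        hence c1: "c \<in> cyc ` Wk (Suc (Suc n)) 1" and c2: "c \<in> cyc ` Wk (Suc (Suc n)) 2"
          by (rule IntD1, rule IntD2)
        obtain p1 where p1: "p1 \<in> Wk (Suc (Suc n)) 1" "c = cyc p1" using c1 by (rule imageE) auto
        obtain p2 where p2: "p2 \<in> Wk (Suc (Suc n)) 2" "c = cyc p2" using c2 by (rule imageE) auto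
        have "nI p1 = nI p2" by (rule cyc_nI) (rule trans[OF sym[OF p1(2)] p2(2)])
        moreover have "nI p1 = 1" "nI p2 = 2" using p1(1) p2(1) unfolding Wk_def by auto
        ultimately show False by simp
      qed
    qed
    also have "(\<Sum>c\<in>cyc ` Wk (Suc (Suc n)) 1. cyc_weight Q c) = (\<Sum>q\<in>Wk (Suc n) 0. f0 q)"
      by (rule cycW1) simp
    also have "\<dots> = (\<Sum>c\<in>P_lm V A src tgt tau (n + 1) m. h1_cyc src Q c)" using P_h1 by simp
    also have "(\<Sum>c\<in>cyc ` Wk (Suc (Suc n)) 2. cyc_weight Q c) = (\<Sum>c\<in>P_lm V A src tgt tau n m. h2_cyc src Q c)"
    proof -
      have "2 * (\<Sum>c\<in>cyc ` Wk (Suc (Suc n)) 2. cyc_weight Q c) = 2 * (\<Sum>c\<in>P_lm V A src tgt tau n m. h2_cyc src Q c)"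
        by (rule trans[OF cycW2[OF npos] sym[OF P_h2[of n]]])
      thus ?thesis by simp
    qed
    finally show ?thesis by (simp add: add.commute)
  qed
  have e3: "P_lm V A src tgt tau (n + 1) m = {}" if bip: "periodic_bipartite V A src tgt tau"
  proof (rule ccontr)
    assume "P_lm V A src tgt tau (n + 1) m \<noteq> {}"
    then obtain q2 where q2: "q2 \<in> Wk (Suc n) 0" using Plm_eq by auto
    obtain q1 where q1: "q1 \<in> Wk n 0" using Wn0 by blast
    obtain f :: "'v \<times> (int ^ 'd) \<Rightarrow> bool" where f: "\<forall>x\<in>V \<times> UNIV. \<forall>y\<in>V \<times> UNIV. periodic_adj A src tgt tau x y \<longrightarrow> f x \<noteq> f y"
      using bip unfolding periodic_bipartite_def by blast
    define v1 where "v1 = arc_src src (hd q1)"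
    define v2 where "v2 = arc_src src (hd q2)"
    have "v1 \<in> V" "v2 \<in> V" using q1 q2 src_hd_V unfolding v1_def v2_def Wk_def by auto
    hence "((v1, 0), (v2, 0)) \<in> {(a, b). periodic_adj A src tgt tau a b}\<^sup>*"
      using G unfolding fundamental_graph_def by blast
    from shift_rtrancl[OF f this, of m]
    have "(f (v1, m) = f (v1, 0)) = (f (v2, m) = f (v2, 0))" by simp
    moreover have "(f (v1, m) = f (v1, 0)) = even n"
      using parity_closed[OF f q1, of 0] unfolding v1_def by simp
    moreover have "(f (v2, m) = f (v2, 0)) = even (Suc n)"
      using parity_closed[OF f q2, of 0] unfolding v2_def by simp
    ultimately show False by simp
  qed
  show ?thesis using e1 e2 e3 by simp
qed

end
end

theorem theorem2p11:
  fixes V :: "'v set" and A :: "'e set" and src tgt :: "'e \<Rightarrow> 'v" and rv :: "'e \<Rightarrow> 'e"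
    and tau :: "'e \<Rightarrow> int ^ 'd" and m :: "int ^ 'd" and Q :: "'v \<Rightarrow> complex" and n :: nat
  assumes G: "fundamental_graph V A src tgt rv tau"
    and prim: "primitive_vec m"
    and ex: "\<exists>p. closed_path V A src tgt p \<and> set p \<subseteq> Inl ` A \<and> sum_list (map (arc_tau tau) p) = m"
    and n_def: "n = shortest_len V A src tgt tau m"
  shows "I_inv V A src tgt tau (n + 1) m Q = (\<Sum>c\<in>P_lm V A src tgt tau n m. h1_cyc src Q c)
     \<and> I_inv V A src tgt tau (n + 2) m Q =
         (\<Sum>c\<in>P_lm V A src tgt tau n m. h2_cyc src Q c)
         + (\<Sum>c\<in>P_lm V A src tgt tau (n + 1) m. h1_cyc src Q c)
     \<and> (periodic_bipartite V A src tgt tau \<longrightarrow>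
          P_lm V A src tgt tau (n + 1) m = {} \<and>
          I_inv V A src tgt tau (n + 2) m Q = (\<Sum>c\<in>P_lm V A src tgt tau n m. h2_cyc src Q c))"
proof -
  interpret GS V A src tgt rv tau m Q using G prim by unfold_locales
  show ?thesis using main[OF ex n_def] .
qed


end
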